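(* Let $X$ be an irreducible shift space which is eventually dendric with threshold $m$. Then for every $w\in\mathcal L(X)$ the set $\mathcal R_X(w)$ is finite. Moreover, for every $w\in\mathcal L_{\ge m}(X)$, $$\mathrm{Card}\,\mathcal R_X(w)=1+\rho_X(\mathcal L_m(X)).$$
   Context: $A$ is a finite alphabet; a shift space is a closed shift-invariant subset $X\subseteq A^{\mathbb Z}$; $\mathcal L(X)$ is its set of finite factors (including the empty word), $\mathcal L_n(X)=\mathcal L(X)\cap A^n$, $\mathcal L_{\ge n}(X)=\bigcup_{k\ge n}\mathcal L_k(X)$. $X$ is irreducible if for all $u,v\in\mathcal L(X)$ there is $w$ with $uwv\in\mathcal L(X)$. For $w\in\mathcal L(X)$, the extension graph $\mathcal E_1(w)$ is the undirected bipartite graph with vertex set the disjoint union of $\{a\in A: aw\in\mathcal L(X)\}$ and $R_1(w)=\{b\in A: wb\in\mathcal L(X)\}$, with an edge $(a,b)$ iff $awb\in\mathcal L(X)$; $X$ is eventually dendric with threshold $m$ if $\mathcal E_1(w)$ is a tree for every $w\in\mathcal L_{\ge m}(X)$. $\rho_X(w)=\mathrm{Card}\,R_1(w)-1$ and $\rho_X(W)=\sum_{w\in W}\rho_X(w)$. A complete return word to $w$ is a word of $\mathcal L(X)$ having exactly two factors equal to $w$, one as a proper prefix and one as a proper suffix; $\mathcal R_X(w)$, the set of (right) return words to $w$, is the set of words $u$ such that $wu$ is a complete return word to $w$. *)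

theory Defs
  imports Main
begin

definition shift :: "(int \<Rightarrow> 'a) \<Rightarrow> (int \<Rightarrow> 'a)" where
  "shift x = (\<lambda>i. x (i + 1))"

text \<open>Closedness in the product topology of the discrete alphabet: a point all of whose
  central windows agree with points of X belongs to X.\<close>
definition closed_shift_set :: "(int \<Rightarrow> 'a) set \<Rightarrow> bool" where
  "closed_shift_set X \<longleftrightarrow>
     (\<forall>x. (\<forall>n::nat. \<exists>y\<in>X. \<forall>i. \<bar>i\<bar> \<le> int n \<longrightarrow> y i = x i) \<longrightarrow> x \<in> X)"

definition shift_space :: "'a set \<Rightarrow> (int \<Rightarrow> 'a) set \<Rightarrow> bool" where
  "shift_space A X \<longleftrightarrow> finite A \<and> X \<subseteq> {x. \<forall>i. x i \<in> A}
     \<and> closed_shift_set X \<and> shift ` X = X"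

definition occurs_at :: "'a list \<Rightarrow> (int \<Rightarrow> 'a) \<Rightarrow> int \<Rightarrow> bool" where
  "occurs_at w x i \<longleftrightarrow> (\<forall>k<length w. x (i + int k) = w ! k)"

definition lang :: "(int \<Rightarrow> 'a) set \<Rightarrow> 'a list set" where
  "lang X = {w. \<exists>x\<in>X. \<exists>i. occurs_at w x i}"

definition lang_n :: "(int \<Rightarrow> 'a) set \<Rightarrow> nat \<Rightarrow> 'a list set" where
  "lang_n X n = {w \<in> lang X. length w = n}"

definition lang_ge :: "(int \<Rightarrow> 'a) set \<Rightarrow> nat \<Rightarrow> 'a list set" where
  "lang_ge X n = {w \<in> lang X. n \<le> length w}"

definition irreducible_shift :: "(int \<Rightarrow> 'a) set \<Rightarrow> bool" where
  "irreducible_shift X \<longleftrightarrow> (\<forall>u\<in>lang X. \<forall>v\<in>lang X. \<exists>w. u @ w @ v \<in> lang X)"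

definition left_ext :: "(int \<Rightarrow> 'a) set \<Rightarrow> 'a list \<Rightarrow> 'a set" where
  "left_ext X w = {a. a # w \<in> lang X}"

definition right_ext :: "(int \<Rightarrow> 'a) set \<Rightarrow> 'a list \<Rightarrow> 'a set" where
  "right_ext X w = {b. w @ [b] \<in> lang X}"

text \<open>Extension graph E_1(w): vertices are the disjoint union (Inl for left letters,
  Inr for right letters), undirected edges between Inl a and Inr b iff a w b is in L(X).\<close>
definition ext_vertices :: "(int \<Rightarrow> 'a) set \<Rightarrow> 'a list \<Rightarrow> ('a + 'a) set" where
  "ext_vertices X w = Inl ` left_ext X w \<union> Inr ` right_ext X w"

definition ext_adj :: "(int \<Rightarrow> 'a) set \<Rightarrow> 'a list \<Rightarrow> ('a + 'a) \<Rightarrow> ('a + 'a) \<Rightarrow> bool" where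
  "ext_adj X w u v \<longleftrightarrow>
     (\<exists>a b. a # w @ [b] \<in> lang X \<and> ((u = Inl a \<and> v = Inr b) \<or> (u = Inr b \<and> v = Inl a)))"

definition graph_connected :: "'v set \<Rightarrow> ('v \<Rightarrow> 'v \<Rightarrow> bool) \<Rightarrow> bool" where
  "graph_connected V E \<longleftrightarrow>
     (\<forall>u\<in>V. \<forall>v\<in>V. \<exists>p. p \<noteq> [] \<and> hd p = u \<and> last p = v \<and> set p \<subseteq> V
        \<and> (\<forall>i. Suc i < length p \<longrightarrow> E (p ! i) (p ! Suc i)))"

definition graph_acyclic :: "'v set \<Rightarrow> ('v \<Rightarrow> 'v \<Rightarrow> bool) \<Rightarrow> bool" where
  "graph_acyclic V E \<longleftrightarrow>
     \<not> (\<exists>p. 3 \<le> length p \<and> distinct p \<and> set p \<subseteq> V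
        \<and> (\<forall>i. Suc i < length p \<longrightarrow> E (p ! i) (p ! Suc i)) \<and> E (last p) (hd p))"

definition graph_tree :: "'v set \<Rightarrow> ('v \<Rightarrow> 'v \<Rightarrow> bool) \<Rightarrow> bool" where
  "graph_tree V E \<longleftrightarrow> V \<noteq> {} \<and> graph_connected V E \<and> graph_acyclic V E"

definition ext_graph_is_tree :: "(int \<Rightarrow> 'a) set \<Rightarrow> 'a list \<Rightarrow> bool" where
  "ext_graph_is_tree X w \<longleftrightarrow> graph_tree (ext_vertices X w) (ext_adj X w)"

definition eventually_dendric :: "(int \<Rightarrow> 'a) set \<Rightarrow> nat \<Rightarrow> bool" where
  "eventually_dendric X m \<longleftrightarrow> (\<forall>w\<in>lang_ge X m. ext_graph_is_tree X w)"

definition rho :: "(int \<Rightarrow> 'a) set \<Rightarrow> 'a list \<Rightarrow> int" where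
  "rho X w = int (card (right_ext X w)) - 1"

definition rho_set :: "(int \<Rightarrow> 'a) set \<Rightarrow> 'a list set \<Rightarrow> int" where
  "rho_set X W = (\<Sum>w\<in>W. rho X w)"

definition word_occ :: "'a list \<Rightarrow> 'a list \<Rightarrow> nat set" where
  "word_occ w u = {i. i + length w \<le> length u \<and> take (length w) (drop i u) = w}"

definition complete_return_word :: "(int \<Rightarrow> 'a) set \<Rightarrow> 'a list \<Rightarrow> 'a list \<Rightarrow> bool" where
  "complete_return_word X w u \<longleftrightarrow> u \<in> lang X \<and> card (word_occ w u) = 2
     \<and> length w < length u
     \<and> take (length w) u = w \<and> drop (length u - length w) u = w"

definition return_words :: "(int \<Rightarrow> 'a) set \<Rightarrow> 'a list \<Rightarrow> 'a list set" where
  "return_words X w = {u. complete_return_word X w (w @ u)}"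

end

theory Submission
  imports Defs
begin



definition chain :: "('v \<Rightarrow> 'v \<Rightarrow> bool) \<Rightarrow> 'v list \<Rightarrow> bool" where
  "chain E p \<longleftrightarrow> (\<forall>i. Suc i < length p \<longrightarrow> E (p ! i) (p ! Suc i))"

lemma chain_Nil[simp]: "chain E []" and chain_single[simp]: "chain E [a]"
  by (auto simp: chain_def)

lemma chain_Cons2[simp]: "chain E (a # b # p) \<longleftrightarrow> E a b \<and> chain E (b # p)"
  apply (auto simp: chain_def)
  subgoal for i by (cases i) auto
  done

lemma chain_drop: "chain E p \<Longrightarrow> chain E (drop i p)"
  by (auto simp: chain_def)

lemma chain_snoc: "chain E p \<Longrightarrow> p \<noteq> [] \<Longrightarrow> E (last p) y \<Longrightarrow> chain E (p @ [y])"
  unfolding chain_def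
proof (intro allI impI)
  fix i assume c: "\<forall>i. Suc i < length p \<longrightarrow> E (p ! i) (p ! Suc i)" and ne: "p \<noteq> []"
    and l: "E (last p) y" and i: "Suc i < length (p @ [y])"
  show "E ((p @ [y]) ! i) ((p @ [y]) ! Suc i)"
  proof (cases "Suc i < length p")
    case True then show ?thesis using c by (simp add: nth_append)
  next
    case False
    then have "Suc i = length p" using i by simp
    then have "i = length p - 1" by simp
    then show ?thesis using l ne by (simp add: nth_append last_conv_nth)
  qed
qed

definition RV :: "'v set \<Rightarrow> ('v \<Rightarrow> 'v \<Rightarrow> bool) \<Rightarrow> 'v \<Rightarrow> 'v \<Rightarrow> bool" where
  "RV V E a b \<longleftrightarrow> a \<in> V \<and> b \<in> V \<and> E a b"

lemma path_rtranclp: "p \<noteq> [] \<Longrightarrow> set p \<subseteq> V \<Longrightarrow> chain E p \<Longrightarrow> (RV V E)\<^sup>*\<^sup>* (hd p) (last p)"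
proof (induction p)
  case Nil then show ?case by simp
next
  case (Cons a q)
  show ?case
  proof (cases q)
    case Nil then show ?thesis by simp
  next
    case (Cons b r)
    with Cons.prems have "E a b" "chain E q" by auto
    with Cons.IH Cons.prems \<open>q = b # r\<close> have "(RV V E)\<^sup>*\<^sup>* b (last q)" by auto
    moreover have "RV V E a b" using Cons.prems \<open>E a b\<close> \<open>q = b # r\<close> by (auto simp: RV_def)
    ultimately show ?thesis using \<open>q = b # r\<close> by (auto intro: converse_rtranclp_into_rtranclp)
  qed
qed

lemma rtranclp_path: "(RV V E)\<^sup>*\<^sup>* u v \<Longrightarrow> v \<in> V \<Longrightarrow>
   \<exists>p. p \<noteq> [] \<and> hd p = u \<and> last p = v \<and> set p \<subseteq> V \<and> chain E p"
proof (induction rule: converse_rtranclp_induct)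
  case base then show ?case by (intro exI[of _ "[v]"]) auto
next
  case (step a b)
  then obtain p where p: "p \<noteq> []" "hd p = b" "last p = v" "set p \<subseteq> V" "chain E p" by auto
  then obtain r where r: "p = b # r" by (cases p) auto
  show ?case using step.hyps(1) p r by (intro exI[of _ "a # p"]) (auto simp: RV_def)
qed

lemma connected_iff: "graph_connected V E \<longleftrightarrow> (\<forall>u\<in>V. \<forall>v\<in>V. (RV V E)\<^sup>*\<^sup>* u v)"
proof
  assume H: "graph_connected V E"
  show "\<forall>u\<in>V. \<forall>v\<in>V. (RV V E)\<^sup>*\<^sup>* u v"
  proof (intro ballI)
    fix u v assume "u \<in> V" "v \<in> V"
    with H obtain p where "p \<noteq> []" "hd p = u" "last p = v" "set p \<subseteq> V" "chain E p"
      unfolding graph_connected_def chain_def by blast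
    then show "(RV V E)\<^sup>*\<^sup>* u v" using path_rtranclp[of p V E] by simp
  qed
next
  assume H: "\<forall>u\<in>V. \<forall>v\<in>V. (RV V E)\<^sup>*\<^sup>* u v"
  show "graph_connected V E" unfolding graph_connected_def
  proof (intro ballI)
    fix u v assume "u \<in> V" "v \<in> V"
    with H have "(RV V E)\<^sup>*\<^sup>* u v" by blast
    from rtranclp_path[OF this \<open>v \<in> V\<close>] obtain p where
      "p \<noteq> [] \<and> hd p = u \<and> last p = v \<and> set p \<subseteq> V \<and> chain E p" by blast
    then show "\<exists>p. p \<noteq> [] \<and> hd p = u \<and> last p = v \<and> set p \<subseteq> V
        \<and> (\<forall>i. Suc i < length p \<longrightarrow> E (p ! i) (p ! Suc i))" unfolding chain_def by blast
  qed
qed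

lemma acyclic_iff: "graph_acyclic V E \<longleftrightarrow>
  \<not> (\<exists>p. 3 \<le> length p \<and> distinct p \<and> set p \<subseteq> V \<and> chain E p \<and> E (last p) (hd p))"
  unfolding graph_acyclic_def chain_def by simp


lemma leaf_exists:
  assumes fin: "finite V" and conn: "graph_connected V E" and acyc: "graph_acyclic V E"
    and irr: "\<And>u. \<not> E u u" and two: "2 \<le> card V"
  shows "\<exists>l\<in>V. \<exists>n\<in>V. E l n \<and> (\<forall>y\<in>V. E l y \<longrightarrow> y = n)"
proof -
  define S where "S = {p. p \<noteq> [] \<and> distinct p \<and> set p \<subseteq> V \<and> chain E p}"
  have "S \<subseteq> {p. set p \<subseteq> V \<and> length p \<le> card V}"
  proof
    fix q assume "q \<in> S"
    then have q: "distinct q" "set q \<subseteq> V" by (auto simp: S_def)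
    then have "length q = card (set q)" by (simp add: distinct_card)
    also have "\<dots> \<le> card V" using card_mono[OF fin q(2)] .
    finally show "q \<in> {p. set p \<subseteq> V \<and> length p \<le> card V}" using q by simp
  qed
  then have finS: "finite S" using finite_lists_length_le[OF fin] by (rule finite_subset)
  from two have "V \<noteq> {}" by auto
  then obtain v0 where "v0 \<in> V" by auto
  then have "[v0] \<in> S" by (auto simp: S_def)
  then have neS: "S \<noteq> {}" by auto
  define M where "M = Max (length ` S)"
  have "M \<in> length ` S" unfolding M_def using finS neS by (intro Max_in) auto
  then obtain p where pS: "p \<in> S" and pM: "length p = M" by auto
  have maxp: "length q \<le> length p" if "q \<in> S" for q
    using pM that finS unfolding M_def by (auto intro: Max_ge)
  from pS have p: "p \<noteq> []" "distinct p" "set p \<subseteq> V" "chain E p" by (auto simp: S_def)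
  define z where "z = last p"
  have zV: "z \<in> V" using p unfolding z_def by auto
  have nb_in: "y \<in> set p" if "y \<in> V" "E z y" for y
  proof (rule ccontr)
    assume "y \<notin> set p"
    then have "p @ [y] \<in> S" using p that unfolding S_def z_def by (auto intro: chain_snoc)
    from maxp[OF this] show False by simp
  qed
  have nb_eq: "y = p ! (length p - 2)" if "y \<in> V" "E z y" for y
  proof -
    from nb_in[OF that] obtain i where i: "i < length p" "p ! i = y" by (auto simp: in_set_conv_nth)
    have "i \<noteq> length p - 1"
    proof
      assume "i = length p - 1"
      then have "y = z" using i p(1) unfolding z_def by (simp add: last_conv_nth)
      then show False using that(2) irr by simp
    qed
    moreover have "\<not> i < length p - 2"
    proof
      assume lt: "i < length p - 2"
      define q where "q = drop i p"
      have "3 \<le> length q" using lt unfolding q_def by auto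
      moreover have "distinct q" "set q \<subseteq> V" "chain E q" using p unfolding q_def
        by (auto intro: chain_drop dest: in_set_dropD)
      moreover have "last q = z" "hd q = y" using lt i p(1) unfolding q_def z_def
        by (auto simp: hd_drop_conv_nth)
      ultimately show False using acyc that(2) unfolding acyclic_iff by blast
    qed
    ultimately have "i = length p - 2" using i by linarith
    then show ?thesis using i by simp
  qed
  have "\<exists>v\<in>V. v \<noteq> z"
  proof (rule ccontr)
    assume "\<not> ?thesis"
    then have "V \<subseteq> {z}" by auto
    then have "card V \<le> 1" using card_mono[of "{z}" V] by auto
    with two show False by simp
  qed
  then obtain v where v: "v \<in> V" "v \<noteq> z" by auto
  have "(RV V E)\<^sup>*\<^sup>* z v" using conn zV v unfolding connected_iff by auto
  then obtain y where "RV V E z y" using v(2) by (cases rule: converse_rtranclpE) auto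
  then have y: "y \<in> V" "E z y" by (auto simp: RV_def)
  show ?thesis
    apply (rule bexI[OF _ zV], rule bexI[OF _ y(1)])
    using y nb_eq by auto
qed


definition Es :: "'v set \<Rightarrow> ('v \<Rightarrow> 'v \<Rightarrow> bool) \<Rightarrow> ('v \<times> 'v) set" where
  "Es V E = {(u, v). u \<in> V \<and> v \<in> V \<and> E u v}"

lemma tree_edges:
  assumes "finite V" "graph_tree V E" "\<And>u v. E u v \<Longrightarrow> E v u" "\<And>u. \<not> E u u"
  shows "card (Es V E) + 2 = 2 * card V"
  using assms(1,2)
proof (induction "card V" arbitrary: V rule: less_induct)
  case less
  note fin = less.prems(1)
  from less.prems(2) have ne: "V \<noteq> {}" and conn: "graph_connected V E" and acyc: "graph_acyclic V E"
    by (auto simp: graph_tree_def)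
  show ?case
  proof (cases "card V \<le> 1")
    case True
    moreover have "card V \<noteq> 0" using ne fin by simp
    ultimately have "card V = 1" by linarith
    then obtain v where V: "V = {v}" using card_1_singletonE by blast
    then have "Es V E = {}" using assms(4) by (auto simp: Es_def)
    then show ?thesis using V by simp
  next
    case False
    then have "2 \<le> card V" by simp
    from leaf_exists[OF fin conn acyc assms(4) this]
    obtain l n where l: "l \<in> V" "n \<in> V" "E l n" "\<forall>y\<in>V. E l y \<longrightarrow> y = n"
      by blast
    have nl: "n \<noteq> l" using l(3) assms(4) by auto
    define V' where "V' = V - {l}"
    have fin': "finite V'" using fin by (simp add: V'_def)
    have cV: "card V = Suc (card V')"
    proof -
      have "card V' = card V - 1" unfolding V'_def using l(1) fin by (simp add: card_Diff_singleton)
      moreover have "card V > 0" using l(1) fin by (auto simp: card_gt_0_iff)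
      ultimately show ?thesis by simp
    qed
    have nV': "n \<in> V'" using l(2) nl by (simp add: V'_def)
    have conn': "graph_connected V' E" unfolding connected_iff
    proof (intro ballI)
      fix u v assume u: "u \<in> V'" and v: "v \<in> V'"
      have "(RV V E)\<^sup>*\<^sup>* u v" using conn u v unfolding connected_iff V'_def by auto
      moreover have "(x \<noteq> l \<longrightarrow> (RV V' E)\<^sup>*\<^sup>* u x) \<and> (x = l \<longrightarrow> (RV V' E)\<^sup>*\<^sup>* u n)"
        if "(RV V E)\<^sup>*\<^sup>* u x" for x
        using that
      proof (induction rule: rtranclp_induct)
        case base then show ?case using u by (auto simp: V'_def)
      next
        case (step x y)
        then have xy: "x \<in> V" "y \<in> V" "E x y" by (auto simp: RV_def)
        show ?case
        proof (cases "y = l")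
          case True
          then have "x \<noteq> l" using xy assms(4) by auto
          moreover have "E l x" using assms(3)[OF xy(3)] True by simp
          then have "x = n" using l(4) xy(1) by blast
          ultimately show ?thesis using step.IH True by auto
        next
          case False
          show ?thesis
          proof (cases "x = l")
            case True
            then have "y = n" using l(4) xy by auto
            then show ?thesis using step.IH True False by auto
          next
            case False2: False
            then have "RV V' E x y" using xy False by (auto simp: RV_def V'_def)
            then show ?thesis using step.IH False False2 by (auto intro: rtranclp.rtrancl_into_rtrancl)
          qed
        qed
      qed
      ultimately show "(RV V' E)\<^sup>*\<^sup>* u v" using v by (auto simp: V'_def)
    qed
    have acyc': "graph_acyclic V' E" unfolding acyclic_iff
    proof
      assume "\<exists>p. 3 \<le> length p \<and> distinct p \<and> set p \<subseteq> V' \<and> chain E p \<and> E (last p) (hd p)"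
      then obtain p where p: "3 \<le> length p" "distinct p" "set p \<subseteq> V'" "chain E p" "E (last p) (hd p)"
        by blast
      have "set p \<subseteq> V" using p(3) by (auto simp: V'_def)
      then have "\<exists>p. 3 \<le> length p \<and> distinct p \<and> set p \<subseteq> V \<and> chain E p \<and> E (last p) (hd p)"
        using p by blast
      then show False using acyc unfolding acyclic_iff by blast
    qed
    have tree': "graph_tree V' E" using nV' conn' acyc' by (auto simp: graph_tree_def)
    have IH: "card (Es V' E) + 2 = 2 * card V'"
      using less.hyps[OF _ fin' tree'] cV by simp
    have EsV: "Es V E = insert (l, n) (insert (n, l) (Es V' E))"
    proof (intro equalityI subsetI)
      fix e assume "e \<in> Es V E"
      then obtain u v where e: "e = (u, v)" "u \<in> V" "v \<in> V" "E u v" by (auto simp: Es_def)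
      show "e \<in> insert (l, n) (insert (n, l) (Es V' E))"
      proof (cases "u = l")
        case True then have "v = n" using l(4) e by blast
        then show ?thesis using e True by simp
      next
        case False
        show ?thesis
        proof (cases "v = l")
          case True
          then have "E l u" using assms(3)[OF e(4)] by simp
          then have "u = n" using l(4) e(2) by blast
          then show ?thesis using e True by simp
        next
          case False2: False
          then show ?thesis using e False by (auto simp: Es_def V'_def)
        qed
      qed
    next
      fix e assume "e \<in> insert (l, n) (insert (n, l) (Es V' E))"
      moreover have "E n l" using assms(3)[OF l(3)] .
      ultimately show "e \<in> Es V E" using l(1,2,3) by (auto simp: Es_def V'_def)
    qed
    have finEs: "finite (Es V' E)"
      by (rule finite_subset[of _ "V' \<times> V'"]) (auto simp: Es_def fin')
    have "(l, n) \<notin> Es V' E" "(n, l) \<notin> Es V' E" by (auto simp: Es_def V'_def)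
    then have "card (Es V E) = card (Es V' E) + 2" using nl finEs unfolding EsV by simp
    then show ?thesis using IH cV by simp
  qed
qed




lemma occurs_at_append:
  "occurs_at (u @ v) x i \<longleftrightarrow> occurs_at u x i \<and> occurs_at v x (i + int (length u))"
proof
  assume H: "occurs_at (u @ v) x i"
  have "occurs_at u x i" unfolding occurs_at_def
  proof (intro allI impI)
    fix k assume "k < length u"
    then show "x (i + int k) = u ! k" using H[unfolded occurs_at_def, rule_format, of k]
      by (simp add: nth_append)
  qed
  moreover have "occurs_at v x (i + int (length u))" unfolding occurs_at_def
  proof (intro allI impI)
    fix k assume "k < length v"
    then show "x (i + int (length u) + int k) = v ! k"
      using H[unfolded occurs_at_def, rule_format, of "length u + k"]
      by (simp add: nth_append add.assoc)
  qed
  ultimately show "occurs_at u x i \<and> occurs_at v x (i + int (length u))" ..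
next
  assume H: "occurs_at u x i \<and> occurs_at v x (i + int (length u))"
  show "occurs_at (u @ v) x i" unfolding occurs_at_def
  proof (intro allI impI)
    fix k assume k: "k < length (u @ v)"
    show "x (i + int k) = (u @ v) ! k"
    proof (cases "k < length u")
      case True then show ?thesis using H unfolding occurs_at_def by (simp add: nth_append)
    next
      case False
      then obtain j where j: "k = length u + j" by (metis le_add_diff_inverse not_less)
      then have "j < length v" using k by simp
      then have "x (i + int (length u) + int j) = v ! j" using H unfolding occurs_at_def by blast
      then show ?thesis using j by (simp add: nth_append add.assoc)
    qed
  qed
qed

lemma lang_appendD: "u @ v \<in> lang X \<Longrightarrow> u \<in> lang X \<and> v \<in> lang X"
  unfolding lang_def using occurs_at_append by blast

lemma lang_prefix: "u @ v \<in> lang X \<Longrightarrow> u \<in> lang X" using lang_appendD by blast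
lemma lang_suffix: "u @ v \<in> lang X \<Longrightarrow> v \<in> lang X" using lang_appendD by blast

lemma lang_take: "w \<in> lang X \<Longrightarrow> take n w \<in> lang X"
  using lang_prefix[of "take n w" "drop n w"] by simp
lemma lang_drop: "w \<in> lang X \<Longrightarrow> drop n w \<in> lang X"
  using lang_suffix[of "take n w" "drop n w"] by simp

lemma lang_right: "w \<in> lang X \<Longrightarrow> \<exists>b. w @ [b] \<in> lang X"
proof -
  assume "w \<in> lang X"
  then obtain x i where xi: "x \<in> X" "occurs_at w x i" unfolding lang_def by blast
  have "occurs_at [x (i + int (length w))] x (i + int (length w))" by (simp add: occurs_at_def)
  then have "occurs_at (w @ [x (i + int (length w))]) x i" using xi occurs_at_append by blast
  then show ?thesis using xi unfolding lang_def by blast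
qed

lemma lang_left: "w \<in> lang X \<Longrightarrow> \<exists>a. a # w \<in> lang X"
proof -
  assume "w \<in> lang X"
  then obtain x i where xi: "x \<in> X" "occurs_at w x i" unfolding lang_def by blast
  have "occurs_at [x (i - 1)] x (i - 1)" by (simp add: occurs_at_def)
  moreover have "occurs_at w x (i - 1 + int (length [x (i - 1)]))" using xi by simp
  ultimately have "occurs_at ([x (i - 1)] @ w) x (i - 1)" using occurs_at_append by blast
  then show ?thesis using xi unfolding lang_def by auto
qed

lemma lang_extend: "w \<in> lang X \<Longrightarrow> \<exists>t. length t = n \<and> w @ t \<in> lang X"
proof (induction n)
  case 0 then show ?case by simp
next
  case (Suc n)
  then obtain t where "length t = n" "w @ t \<in> lang X" by blast
  moreover from lang_right[OF this(2)] obtain b where "(w @ t) @ [b] \<in> lang X" by blast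
  ultimately show ?case by (intro exI[of _ "t @ [b]"]) simp
qed

lemma lang_set: "shift_space A X \<Longrightarrow> w \<in> lang X \<Longrightarrow> set w \<subseteq> A"
proof
  fix c assume ss: "shift_space A X" and w: "w \<in> lang X" and c: "c \<in> set w"
  from w obtain x i where xi: "x \<in> X" "occurs_at w x i" unfolding lang_def by blast
  from c obtain k where k: "k < length w" "w ! k = c" by (auto simp: in_set_conv_nth)
  then have "x (i + int k) = c" using xi unfolding occurs_at_def by blast
  moreover have "x (i + int k) \<in> A" using ss xi unfolding shift_space_def by blast
  ultimately show "c \<in> A" by simp
qed

lemma word_occ_finite: "finite (word_occ w u)"
  by (rule finite_subset[of _ "{..length u}"]) (auto simp: word_occ_def)

lemma word_occ_shift: "j \<in> word_occ w (drop i u) \<Longrightarrow> i \<le> length u \<Longrightarrow> i + j \<in> word_occ w u"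
  unfolding word_occ_def by (auto simp: add.commute)

lemma word_occ_zero: "0 \<in> word_occ w (w @ p)"
  unfolding word_occ_def by simp

lemma word_occ_mid: "length y \<in> word_occ w (y @ w @ d)"
  unfolding word_occ_def by simp

lemma word_occ_append_sub: "word_occ w u \<subseteq> word_occ w (u @ v)"
  unfolding word_occ_def by auto

lemma word_occ_snoc: "i \<in> word_occ w (u @ [b]) \<Longrightarrow> i \<in> word_occ w u \<or> i + length w = length u + 1"
  unfolding word_occ_def by auto

lemma word_occ_right: "i \<in> word_occ w (a @ b) \<Longrightarrow> length a \<le> i \<Longrightarrow> i - length a \<in> word_occ w b"
  unfolding word_occ_def by auto

lemma word_occ_self: "word_occ w w = {0}"
  unfolding word_occ_def by auto




locale SS =
  fixes A :: "'a set" and X :: "(int \<Rightarrow> 'a) set" and m :: nat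
  assumes ss: "shift_space A X" and ed: "eventually_dendric X m"
begin

lemma finA: "finite A" using ss by (simp add: shift_space_def)

lemma setL: "w \<in> lang X \<Longrightarrow> set w \<subseteq> A" using lang_set[OF ss] by blast

lemma right_sub: "right_ext X w \<subseteq> A"
  unfolding right_ext_def using setL by fastforce

lemma left_sub: "left_ext X w \<subseteq> A"
  unfolding left_ext_def using setL by fastforce

lemma fin_right: "finite (right_ext X w)" using finite_subset[OF right_sub finA] .
lemma fin_left: "finite (left_ext X w)" using finite_subset[OF left_sub finA] .

lemma right_ne: "w \<in> lang X \<Longrightarrow> right_ext X w \<noteq> {}"
  unfolding right_ext_def using lang_right by blast

lemma rho_nonneg: "w \<in> lang X \<Longrightarrow> 0 \<le> rho X w"
proof -
  assume "w \<in> lang X"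
  then have "card (right_ext X w) \<noteq> 0" using right_ne fin_right by simp
  then show ?thesis unfolding rho_def by simp
qed

lemma fin_lists: "finite {xs. set xs \<subseteq> A \<and> length xs = n}"
  using finite_lists_length_eq[OF finA] .

lemma fin_lang_n: "finite (lang_n X n)"
  by (rule finite_subset[OF _ fin_lists[of n]]) (auto simp: lang_n_def dest: setL)

lemma rho_split:
  assumes y: "y \<in> lang X" and my: "m \<le> length y"
  shows "rho X y = (\<Sum>a\<in>left_ext X y. rho X (a # y))"
proof -
  let ?V = "ext_vertices X y" and ?E = "ext_adj X y"
  let ?Pr = "SIGMA a:left_ext X y. right_ext X (a # y)"
  have tree: "graph_tree ?V ?E" using ed y my
    unfolding eventually_dendric_def ext_graph_is_tree_def lang_ge_def by blast
  have finV: "finite ?V" unfolding ext_vertices_def using fin_left fin_right by simp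
  have sym: "\<And>u v. ?E u v \<Longrightarrow> ?E v u" unfolding ext_adj_def by blast
  have irr: "\<And>u. \<not> ?E u u" unfolding ext_adj_def by blast
  from tree_edges[OF finV tree sym irr] have T: "card (Es ?V ?E) + 2 = 2 * card ?V" .
  have pr_iff: "(a, b) \<in> ?Pr \<longleftrightarrow> a # y @ [b] \<in> lang X" for a b
  proof
    assume "(a, b) \<in> ?Pr" then show "a # y @ [b] \<in> lang X" by (simp add: right_ext_def)
  next
    assume H: "a # y @ [b] \<in> lang X"
    then have "a # y \<in> lang X" using lang_prefix[of "a # y" "[b]"] by simp
    then show "(a, b) \<in> ?Pr" using H by (simp add: left_ext_def right_ext_def)
  qed
  define f1 where "f1 = (\<lambda>(a::'a, b::'a). (Inl a :: 'a + 'a, Inr b :: 'a + 'a))"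
  define f2 where "f2 = (\<lambda>(a::'a, b::'a). (Inr b :: 'a + 'a, Inl a :: 'a + 'a))"
  have EsEq: "Es ?V ?E = f1 ` ?Pr \<union> f2 ` ?Pr"
  proof (intro equalityI subsetI)
    fix e assume "e \<in> Es ?V ?E"
    then obtain u v where e: "e = (u, v)" "?E u v" by (auto simp: Es_def)
    then obtain a b where ab: "a # y @ [b] \<in> lang X" "(u = Inl a \<and> v = Inr b) \<or> (u = Inr b \<and> v = Inl a)"
      unfolding ext_adj_def by blast
    have "(a, b) \<in> ?Pr" using pr_iff ab(1) by blast
    then show "e \<in> f1 ` ?Pr \<union> f2 ` ?Pr" using ab(2) e(1) unfolding f1_def f2_def by force
  next
    fix e assume "e \<in> f1 ` ?Pr \<union> f2 ` ?Pr"
    then obtain a b where ab: "(a, b) \<in> ?Pr" "e = (Inl a, Inr b) \<or> e = (Inr b, Inl a)"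
      unfolding f1_def f2_def by auto
    have L: "a # y @ [b] \<in> lang X" using pr_iff ab(1) by blast
    have "a \<in> left_ext X y" using ab(1) by simp
    moreover have "y @ [b] \<in> lang X" using lang_suffix[of "[a]" "y @ [b]"] L by simp
    then have "b \<in> right_ext X y" by (simp add: right_ext_def)
    ultimately have "Inl a \<in> ?V" "Inr b \<in> ?V" unfolding ext_vertices_def by auto
    moreover have "?E (Inl a) (Inr b)" "?E (Inr b) (Inl a)" using L unfolding ext_adj_def by blast+
    ultimately show "e \<in> Es ?V ?E" using ab(2) unfolding Es_def by auto
  qed
  have finPr: "finite ?Pr" using fin_left fin_right by simp
  have inj1: "inj_on f1 ?Pr" unfolding f1_def inj_on_def by auto
  have inj2: "inj_on f2 ?Pr" unfolding f2_def inj_on_def by auto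
  have disj: "f1 ` ?Pr \<inter> f2 ` ?Pr = {}" unfolding f1_def f2_def by auto
  have c1: "card (f1 ` ?Pr) = card ?Pr" by (rule card_image[OF inj1])
  have c2: "card (f2 ` ?Pr) = card ?Pr" by (rule card_image[OF inj2])
  have "card (Es ?V ?E) = card (f1 ` ?Pr) + card (f2 ` ?Pr)"
    unfolding EsEq by (intro card_Un_disjoint finite_imageI finPr disj)
  then have cE: "card (Es ?V ?E) = card ?Pr + card ?Pr" using c1 c2 by simp
  have dLR: "(Inl :: 'a \<Rightarrow> 'a + 'a) ` left_ext X y \<inter> (Inr :: 'a \<Rightarrow> 'a + 'a) ` right_ext X y = {}" by auto
  have "card ?V = card ((Inl :: 'a \<Rightarrow> 'a + 'a) ` left_ext X y) + card ((Inr :: 'a \<Rightarrow> 'a + 'a) ` right_ext X y)"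
    unfolding ext_vertices_def by (rule card_Un_disjoint) (simp_all add: fin_left fin_right dLR)
  moreover have "card ((Inl :: 'a \<Rightarrow> 'a + 'a) ` left_ext X y) = card (left_ext X y)"
    by (rule card_image) (simp add: inj_on_def)
  moreover have "card ((Inr :: 'a \<Rightarrow> 'a + 'a) ` right_ext X y) = card (right_ext X y)"
    by (rule card_image) (simp add: inj_on_def)
  ultimately have cV: "card ?V = card (left_ext X y) + card (right_ext X y)" by simp
  from T cE cV have C: "card ?Pr + 1 = card (left_ext X y) + card (right_ext X y)" by simp
  have cP: "card ?Pr = (\<Sum>a\<in>left_ext X y. card (right_ext X (a # y)))"
    by (simp add: card_SigmaI fin_left fin_right)
  have "int (card ?Pr) + 1 = int (card (left_ext X y)) + int (card (right_ext X y))"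
    using C by (metis of_nat_1 of_nat_add)
  then have "int (card (right_ext X y)) - 1 = int (card ?Pr) - int (card (left_ext X y))" by simp
  also have "int (card ?Pr) = (\<Sum>a\<in>left_ext X y. int (card (right_ext X (a # y))))"
    unfolding cP by (simp add: of_nat_sum)
  also have "(\<Sum>a\<in>left_ext X y. int (card (right_ext X (a # y)))) - int (card (left_ext X y))
      = (\<Sum>a\<in>left_ext X y. int (card (right_ext X (a # y))) - 1)"
    by (simp add: sum_subtractf)
  finally show ?thesis unfolding rho_def .
qed

end



definition XL :: "(int \<Rightarrow> 'a) set \<Rightarrow> nat \<Rightarrow> 'a list \<Rightarrow> 'a list set" where
  "XL X k y = {x. length x = k \<and> x @ y \<in> lang X}"

definition Pw :: "(int \<Rightarrow> 'a) set \<Rightarrow> 'a list \<Rightarrow> 'a list set" where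
  "Pw X w = {p. w @ p \<in> lang X \<and> word_occ w (w @ p) = {0}}"

lemma Pw_inj:
  assumes p: "p \<in> Pw X w" and p': "p' \<in> Pw X w" and eq: "x @ w @ p = x' @ w @ p'"
  shows "p = p' \<and> x = x'"
proof -
  from eq have "x @ (w @ p) = x' @ (w @ p')" by simp
  then obtain us where us: "(x = x' @ us \<and> us @ (w @ p) = w @ p') \<or> (x @ us = x' \<and> w @ p = us @ (w @ p'))"
    unfolding append_eq_append_conv2 by blast
  then show ?thesis
  proof
    assume H: "x = x' @ us \<and> us @ (w @ p) = w @ p'"
    have "length us \<in> word_occ w (us @ w @ p)" by (rule word_occ_mid)
    then have "length us \<in> word_occ w (w @ p')" using H by simp
    then have "us = []" using p' unfolding Pw_def by auto
    then show ?thesis using H by simp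
  next
    assume H: "x @ us = x' \<and> w @ p = us @ (w @ p')"
    have "length us \<in> word_occ w (us @ w @ p')" by (rule word_occ_mid)
    then have "length us \<in> word_occ w (w @ p)" using H by simp
    then have "us = []" using p unfolding Pw_def by auto
    then show ?thesis using H by simp
  qed
qed

lemma cover:
  assumes u: "u \<in> lang X" and ne: "word_occ w u \<noteq> {}"
  shows "\<exists>x p. u = x @ w @ p \<and> p \<in> Pw X w"
proof -
  define i where "i = Max (word_occ w u)"
  have iin: "i \<in> word_occ w u" unfolding i_def using ne word_occ_finite by (rule Max_in[rotated])
  have imax: "j \<le> i" if "j \<in> word_occ w u" for j
    unfolding i_def using that word_occ_finite by (rule Max_ge[rotated])
  from iin have il: "i + length w \<le> length u" and it: "take (length w) (drop i u) = w"
    unfolding word_occ_def by auto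
  have d: "drop i u = w @ drop (i + length w) u"
  proof -
    have "drop i u = take (length w) (drop i u) @ drop (length w) (drop i u)"
      by (rule append_take_drop_id[symmetric])
    moreover have "drop (length w) (drop i u) = drop (i + length w) u" by (simp add: add.commute)
    ultimately show ?thesis using it by simp
  qed
  define p where "p = drop (i + length w) u"
  have u_eq: "u = take i u @ w @ p" using d unfolding p_def by (metis append_take_drop_id)
  have wpL: "w @ p \<in> lang X" using lang_drop[OF u, of i] d unfolding p_def by simp
  have "word_occ w (w @ p) = {0}"
  proof (intro equalityI subsetI)
    fix j assume "j \<in> word_occ w (w @ p)"
    then have "j \<in> word_occ w (drop i u)" using d unfolding p_def by simp
    then have "i + j \<in> word_occ w u" using il by (intro word_occ_shift) auto
    then have "i + j \<le> i" by (rule imax)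
    then show "j \<in> {0}" by simp
  next
    fix j assume "j \<in> {0::nat}" then show "j \<in> word_occ w (w @ p)" using word_occ_zero by simp
  qed
  then have "p \<in> Pw X w" using wpL unfolding Pw_def by simp
  then show ?thesis using u_eq by blast
qed

context SS
begin

lemma fin_XL: "finite (XL X k y)"
proof (rule finite_subset[OF _ fin_lists[of k]])
  show "XL X k y \<subseteq> {xs. set xs \<subseteq> A \<and> length xs = k}"
  proof
    fix x assume "x \<in> XL X k y"
    then have "length x = k" "x @ y \<in> lang X" by (auto simp: XL_def)
    then show "x \<in> {xs. set xs \<subseteq> A \<and> length xs = k}" using setL[of "x @ y"] by simp
  qed
qed

lemma XL_Suc: "XL X (Suc k) y = (\<lambda>(x, a). a # x) ` (SIGMA x:XL X k y. left_ext X (x @ y))"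
proof (intro equalityI subsetI)
  fix z assume "z \<in> XL X (Suc k) y"
  then have z: "length z = Suc k" "z @ y \<in> lang X" by (auto simp: XL_def)
  then obtain a x where ax: "z = a # x" by (cases z) auto
  have "x @ y \<in> lang X" using z(2) ax lang_suffix[of "[a]" "x @ y"] by simp
  then have "x \<in> XL X k y" using z ax by (simp add: XL_def)
  moreover have "a \<in> left_ext X (x @ y)" using z(2) ax by (simp add: left_ext_def)
  ultimately show "z \<in> (\<lambda>(x, a). a # x) ` (SIGMA x:XL X k y. left_ext X (x @ y))"
    using ax by force
next
  fix z assume "z \<in> (\<lambda>(x, a). a # x) ` (SIGMA x:XL X k y. left_ext X (x @ y))"
  then obtain x a where "z = a # x" "x \<in> XL X k y" "a \<in> left_ext X (x @ y)" by auto
  then show "z \<in> XL X (Suc k) y" by (simp add: XL_def left_ext_def)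
qed

lemma rho_ext:
  assumes y: "y \<in> lang X" and my: "m \<le> length y"
  shows "rho X y = (\<Sum>x\<in>XL X k y. rho X (x @ y))"
proof (induction k)
  case 0
  have "XL X 0 y = {[]}" using y by (auto simp: XL_def)
  then show ?case by simp
next
  case (Suc k)
  have inj: "inj_on (\<lambda>(x, a). a # x) (SIGMA x:XL X k y. left_ext X (x @ y))"
    unfolding inj_on_def by auto
  have "(\<Sum>z\<in>XL X (Suc k) y. rho X (z @ y))
      = (\<Sum>q\<in>(SIGMA x:XL X k y. left_ext X (x @ y)). rho X ((case q of (x, a) \<Rightarrow> a # x) @ y))"
    unfolding XL_Suc by (subst sum.reindex[OF inj]) (simp add: comp_def)
  also have "\<dots> = (\<Sum>(x, a)\<in>(SIGMA x:XL X k y. left_ext X (x @ y)). rho X (a # x @ y))"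
    by (rule sum.cong) (auto split: prod.splits)
  also have "\<dots> = (\<Sum>x\<in>XL X k y. \<Sum>a\<in>left_ext X (x @ y). rho X (a # (x @ y)))"
    by (rule sum.Sigma[symmetric]) (auto simp: fin_XL fin_left)
  also have "\<dots> = (\<Sum>x\<in>XL X k y. rho X (x @ y))"
  proof (rule sum.cong[OF refl])
    fix x assume "x \<in> XL X k y"
    then have "x @ y \<in> lang X" by (simp add: XL_def)
    moreover have "m \<le> length (x @ y)" using my by simp
    ultimately show "(\<Sum>a\<in>left_ext X (x @ y). rho X (a # (x @ y))) = rho X (x @ y)"
      using rho_split by simp
  qed
  finally show ?case using Suc.IH by simp
qed

lemma sum_lang_n:
  assumes N: "m \<le> N"
  shows "(\<Sum>u\<in>lang_n X N. rho X u) = (\<Sum>v\<in>lang_n X m. rho X v)"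
proof -
  let ?S = "SIGMA v:lang_n X m. XL X (N - m) v"
  let ?f = "\<lambda>(v, x). x @ v"
  have inj: "inj_on ?f ?S"
  proof (rule inj_onI)
    fix a b assume a: "a \<in> ?S" and b: "b \<in> ?S" and e: "?f a = ?f b"
    obtain v x where av: "a = (v, x)" by (cases a)
    obtain v' x' where bv: "b = (v', x')" by (cases b)
    have "length v = length v'" using a b av bv by (simp add: lang_n_def)
    then show "a = b" using e av bv by simp
  qed
  have img: "lang_n X N = ?f ` ?S"
  proof (intro equalityI subsetI)
    fix u assume u: "u \<in> lang_n X N"
    then have uL: "u \<in> lang X" and lu: "length u = N" by (auto simp: lang_n_def)
    define v where "v = drop (N - m) u"
    define x where "x = take (N - m) u"
    have "v \<in> lang_n X m" using lang_drop[OF uL] lu N unfolding v_def lang_n_def by simp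
    moreover have "x \<in> XL X (N - m) v" using uL lu N unfolding XL_def x_def v_def by simp
    moreover have "u = x @ v" unfolding x_def v_def by simp
    ultimately show "u \<in> ?f ` ?S" by force
  next
    fix u assume "u \<in> ?f ` ?S"
    then obtain v x where "v \<in> lang_n X m" "x \<in> XL X (N - m) v" "u = x @ v" by auto
    then show "u \<in> lang_n X N" using N by (auto simp: lang_n_def XL_def)
  qed
  have "(\<Sum>u\<in>lang_n X N. rho X u) = (\<Sum>q\<in>?S. rho X (?f q))"
    unfolding img by (subst sum.reindex[OF inj]) simp
  also have "\<dots> = (\<Sum>(v, x)\<in>?S. rho X (x @ v))"
    by (rule sum.cong) (auto split: prod.splits)
  also have "\<dots> = (\<Sum>v\<in>lang_n X m. \<Sum>x\<in>XL X (N - m) v. rho X (x @ v))"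
    by (rule sum.Sigma[symmetric]) (auto simp: fin_XL fin_lang_n)
  also have "\<dots> = (\<Sum>v\<in>lang_n X m. rho X v)"
  proof (rule sum.cong[OF refl])
    fix v assume "v \<in> lang_n X m"
    then show "(\<Sum>x\<in>XL X (N - m) v. rho X (x @ v)) = rho X v"
      using rho_ext[of v "N - m"] by (simp add: lang_n_def)
  qed
  finally show ?thesis .
qed

end



context SS
begin

lemma Pw_Nil: "w \<in> lang X \<Longrightarrow> [] \<in> Pw X w"
  by (simp add: Pw_def word_occ_self)

lemma Pw_prefix: "p @ q \<in> Pw X w \<Longrightarrow> p \<in> Pw X w"
proof -
  assume H: "p @ q \<in> Pw X w"
  then have L: "(w @ p) @ q \<in> lang X" and O: "word_occ w ((w @ p) @ q) = {0}" by (auto simp: Pw_def)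
  have "w @ p \<in> lang X" using lang_prefix[OF L] .
  moreover have "word_occ w (w @ p) \<subseteq> {0}" using word_occ_append_sub[of w "w @ p" q] O by simp
  then have "word_occ w (w @ p) = {0}" using word_occ_zero[of w p] by blast
  ultimately show ?thesis by (simp add: Pw_def)
qed

lemma Pw_take: "q \<in> Pw X w \<Longrightarrow> take n q \<in> Pw X w"
  using Pw_prefix[of "take n q" "drop n q"] by simp

lemma Pw_set: "p \<in> Pw X w \<Longrightarrow> set p \<subseteq> A"
  using setL[of "w @ p"] by (auto simp: Pw_def)

lemma Pw_L: "p \<in> Pw X w \<Longrightarrow> w @ p \<in> lang X" by (simp add: Pw_def)

definition GR :: "'a list \<Rightarrow> 'a list set \<Rightarrow> nat \<Rightarrow> 'a list set" where
  "GR w F N = (\<Union>p\<in>F. (\<lambda>x. x @ w @ p) ` XL X (N - length (w @ p)) (w @ p))"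

lemma GR_sub: "\<forall>p\<in>F. length (w @ p) \<le> N \<Longrightarrow> GR w F N \<subseteq> lang_n X N"
  unfolding GR_def XL_def lang_n_def by auto

lemma group_sum:
  assumes w: "w \<in> lang X" and mw: "m \<le> length w" and F: "finite F" and FP: "F \<subseteq> Pw X w"
    and N: "\<forall>p\<in>F. length (w @ p) \<le> N"
  shows "(\<Sum>p\<in>F. rho X (w @ p)) = (\<Sum>u\<in>GR w F N. rho X u)"
proof -
  let ?G = "\<lambda>p. (\<lambda>x. x @ w @ p) ` XL X (N - length (w @ p)) (w @ p)"
  have disj: "\<forall>p\<in>F. \<forall>q\<in>F. p \<noteq> q \<longrightarrow> ?G p \<inter> ?G q = {}"
  proof (intro ballI impI)
    fix p q assume p: "p \<in> F" and q: "q \<in> F" and pq: "p \<noteq> q"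
    show "?G p \<inter> ?G q = {}"
    proof (rule ccontr)
      assume "?G p \<inter> ?G q \<noteq> {}"
      then obtain x y where "x @ w @ p = y @ w @ q" by auto
      then have "p = q" using Pw_inj[of p X w q x y] p q FP by blast
      then show False using pq by simp
    qed
  qed
  have "(\<Sum>u\<in>GR w F N. rho X u) = (\<Sum>p\<in>F. \<Sum>u\<in>?G p. rho X u)"
    unfolding GR_def by (rule sum.UNION_disjoint[OF F _ disj]) (simp add: fin_XL)
  also have "\<dots> = (\<Sum>p\<in>F. rho X (w @ p))"
  proof (rule sum.cong[OF refl])
    fix p assume p: "p \<in> F"
    have inj: "inj_on (\<lambda>x. x @ w @ p) (XL X (N - length (w @ p)) (w @ p))"
      by (rule inj_onI) simp
    have "(\<Sum>u\<in>?G p. rho X u) = (\<Sum>x\<in>XL X (N - length (w @ p)) (w @ p). rho X (x @ w @ p))"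
      by (subst sum.reindex[OF inj]) simp
    also have "\<dots> = rho X (w @ p)"
      using rho_ext[of "w @ p" "N - length (w @ p)"] Pw_L[of p w] p FP mw by auto
    finally show "(\<Sum>u\<in>?G p. rho X u) = rho X (w @ p)" .
  qed
  finally show ?thesis by simp
qed

abbreviation "sm \<equiv> (\<Sum>v\<in>lang_n X m. rho X v)"

lemma sum_le:
  assumes w: "w \<in> lang X" and mw: "m \<le> length w" and F: "finite F" and FP: "F \<subseteq> Pw X w"
  shows "(\<Sum>p\<in>F. rho X (w @ p)) \<le> sm"
proof -
  define N where "N = length w + (\<Sum>p\<in>F. length p)"
  have N: "\<forall>p\<in>F. length (w @ p) \<le> N"
    unfolding N_def using member_le_sum[OF _ _ F, of _ length] by simp
  have mN: "m \<le> N" using mw unfolding N_def by simp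
  have "(\<Sum>p\<in>F. rho X (w @ p)) = (\<Sum>u\<in>GR w F N. rho X u)" by (rule group_sum[OF w mw F FP N])
  also have "\<dots> \<le> (\<Sum>u\<in>lang_n X N. rho X u)"
    by (rule sum_mono2[OF fin_lang_n GR_sub[OF N]]) (auto simp: lang_n_def intro: rho_nonneg)
  also have "\<dots> = sm" by (rule sum_lang_n[OF mN])
  finally show ?thesis .
qed

lemma sum_eq:
  assumes w: "w \<in> lang X" and mw: "m \<le> length w" and F: "finite (Pw X w)"
    and UR: "\<forall>u\<in>lang X. K \<le> length u \<longrightarrow> word_occ w u \<noteq> {}"
  shows "(\<Sum>p\<in>Pw X w. rho X (w @ p)) = sm"
proof -
  define N where "N = K + length w + (\<Sum>p\<in>Pw X w. length p)"
  have N: "\<forall>p\<in>Pw X w. length (w @ p) \<le> N"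
  proof
    fix p assume "p \<in> Pw X w"
    then have "length p \<le> (\<Sum>p\<in>Pw X w. length p)" using member_le_sum[OF _ _ F, of _ length] by simp
    then show "length (w @ p) \<le> N" unfolding N_def by simp
  qed
  have mN: "m \<le> N" using mw unfolding N_def by simp
  have "GR w (Pw X w) N = lang_n X N"
  proof (intro equalityI subsetI)
    fix u assume "u \<in> GR w (Pw X w) N" then show "u \<in> lang_n X N" using GR_sub[OF N] by blast
  next
    fix u assume u: "u \<in> lang_n X N"
    then have uL: "u \<in> lang X" and lu: "length u = N" by (auto simp: lang_n_def)
    have "word_occ w u \<noteq> {}" using UR uL lu unfolding N_def by simp
    from cover[OF uL this] obtain x p where xp: "u = x @ w @ p" "p \<in> Pw X w" by blast
    have "x \<in> XL X (N - length (w @ p)) (w @ p)" using xp uL lu unfolding XL_def by simp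
    then show "u \<in> GR w (Pw X w) N" using xp unfolding GR_def by blast
  qed
  then have "(\<Sum>p\<in>Pw X w. rho X (w @ p)) = (\<Sum>u\<in>lang_n X N. rho X u)"
    using group_sum[OF w mw F subset_refl N] by simp
  also have "\<dots> = sm" by (rule sum_lang_n[OF mN])
  finally show ?thesis .
qed

end



lemma word_occ_left: "j \<in> word_occ w b \<Longrightarrow> length a + j \<in> word_occ w (a @ b)"
  unfolding word_occ_def by auto

lemma word_occ_mono_word: "i \<in> word_occ (w @ t) u \<Longrightarrow> i \<in> word_occ w u"
proof -
  assume "i \<in> word_occ (w @ t) u"
  then have H: "i + length (w @ t) \<le> length u" "take (length (w @ t)) (drop i u) = w @ t"
    unfolding word_occ_def by auto
  have "take (length w) (drop i u) = take (length w) (take (length (w @ t)) (drop i u))"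
    by (simp add: min_def)
  also have "\<dots> = w" using H(2) by simp
  finally show ?thesis using H(1) unfolding word_occ_def by simp
qed

context SS
begin

lemma occ_snoc_Pw: "p \<in> Pw X w \<Longrightarrow> word_occ w (w @ p @ [b]) \<subseteq> {0, length p + 1}"
proof
  fix i assume p: "p \<in> Pw X w" and i: "i \<in> word_occ w (w @ p @ [b])"
  then have "i \<in> word_occ w ((w @ p) @ [b])" by simp
  from word_occ_snoc[OF this] show "i \<in> {0, length p + 1}"
    using p unfolding Pw_def by auto
qed

lemma ret_char:
  "u \<in> return_words X w \<longleftrightarrow>
     (\<exists>p b. u = p @ [b] \<and> p \<in> Pw X w \<and> w @ p @ [b] \<in> lang X \<and> word_occ w (w @ p @ [b]) \<noteq> {0})"
proof
  assume "u \<in> return_words X w"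
  then have c: "w @ u \<in> lang X" "card (word_occ w (w @ u)) = 2" "length w < length (w @ u)"
    "drop (length (w @ u) - length w) (w @ u) = w"
    unfolding return_words_def complete_return_word_def by auto
  then have "u \<noteq> []" by auto
  then obtain p b where u: "u = p @ [b]" by (cases u rule: rev_exhaust) auto
  have d: "drop (length u) (w @ u) = w" using c(4) by simp
  have lu: "length u \<in> word_occ w (w @ u)" unfolding word_occ_def using d by simp
  have sub: "{0, length u} \<subseteq> word_occ w (w @ u)" using lu word_occ_zero[of w u] by simp
  have "card {0, length u} = 2" using u by simp
  then have O: "word_occ w (w @ u) = {0, length u}"
    using card_subset_eq[OF word_occ_finite sub] c(2) by simp
  have wpL: "w @ p \<in> lang X" using c(1) u lang_prefix[of "w @ p" "[b]"] by simp
  have "word_occ w (w @ p) \<subseteq> {0, length u}" using O word_occ_append_sub[of w "w @ p" "[b]"] u by simp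
  moreover have "length u \<notin> word_occ w (w @ p)" using u unfolding word_occ_def by simp
  ultimately have "word_occ w (w @ p) \<subseteq> {0}" by blast
  then have "word_occ w (w @ p) = {0}" using word_occ_zero[of w p] by blast
  then have "p \<in> Pw X w" using wpL by (simp add: Pw_def)
  moreover have "word_occ w (w @ p @ [b]) \<noteq> {0}" using O u by auto
  ultimately show "\<exists>p b. u = p @ [b] \<and> p \<in> Pw X w \<and> w @ p @ [b] \<in> lang X \<and> word_occ w (w @ p @ [b]) \<noteq> {0}"
    using u c(1) by blast
next
  assume "\<exists>p b. u = p @ [b] \<and> p \<in> Pw X w \<and> w @ p @ [b] \<in> lang X \<and> word_occ w (w @ p @ [b]) \<noteq> {0}"
  then obtain p b where H: "u = p @ [b]" "p \<in> Pw X w" "w @ p @ [b] \<in> lang X" "word_occ w (w @ p @ [b]) \<noteq> {0}"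
    by blast
  have S: "word_occ w (w @ p @ [b]) \<subseteq> {0, length p + 1}" by (rule occ_snoc_Pw[OF H(2)])
  have z: "0 \<in> word_occ w (w @ p @ [b])" using word_occ_zero[of w "p @ [b]"] by simp
  have l: "length p + 1 \<in> word_occ w (w @ p @ [b])" using S z H(4) by blast
  have O: "word_occ w (w @ p @ [b]) = {0, length p + 1}" using S z l by blast
  have "take (length w) (drop (length p + 1) (w @ p @ [b])) = w" using l unfolding word_occ_def by blast
  moreover have "length (drop (length p + 1) (w @ p @ [b])) = length w" by simp
  ultimately have dr: "drop (length p + 1) (w @ p @ [b]) = w" by simp
  show "u \<in> return_words X w"
    unfolding return_words_def complete_return_word_def using H(1,3) O dr by simp
qed

lemma ret_count:
  assumes w: "w \<in> lang X" and F: "finite (Pw X w)"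
  shows "finite (return_words X w) \<and> int (card (return_words X w)) = 1 + (\<Sum>p\<in>Pw X w. rho X (w @ p))"
proof -
  let ?Sg = "SIGMA p:Pw X w. right_ext X (w @ p)"
  let ?f = "\<lambda>(p, b). p @ [b]"
  let ?R = "return_words X w"
  have finSg: "finite ?Sg" using F fin_right by simp
  have inj: "inj_on ?f ?Sg" unfolding inj_on_def by auto
  have img: "?f ` ?Sg = (Pw X w - {[]}) \<union> ?R"
  proof (intro equalityI subsetI)
    fix q assume "q \<in> ?f ` ?Sg"
    then obtain p b where pb: "q = p @ [b]" "p \<in> Pw X w" "w @ p @ [b] \<in> lang X"
      by (auto simp: right_ext_def)
    show "q \<in> (Pw X w - {[]}) \<union> ?R"
    proof (cases "word_occ w (w @ p @ [b]) = {0}")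
      case True
      then have "q \<in> Pw X w" using pb by (simp add: Pw_def)
      then show ?thesis using pb by simp
    next
      case False
      then have "q \<in> ?R" using ret_char pb by blast
      then show ?thesis by simp
    qed
  next
    fix q assume "q \<in> (Pw X w - {[]}) \<union> ?R"
    then show "q \<in> ?f ` ?Sg"
    proof
      assume q: "q \<in> Pw X w - {[]}"
      then obtain p b where pb: "q = p @ [b]" by (cases q rule: rev_exhaust) auto
      have "p \<in> Pw X w" using Pw_prefix q pb by blast
      moreover have "b \<in> right_ext X (w @ p)" using q pb by (simp add: Pw_def right_ext_def)
      ultimately show ?thesis using pb by force
    next
      assume "q \<in> ?R"
      then obtain p b where pb: "q = p @ [b]" "p \<in> Pw X w" "w @ p @ [b] \<in> lang X" using ret_char by blast
      then have "b \<in> right_ext X (w @ p)" by (simp add: right_ext_def)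
      then show ?thesis using pb by force
    qed
  qed
  have disj: "(Pw X w - {[]}) \<inter> ?R = {}"
  proof (rule ccontr)
    assume "(Pw X w - {[]}) \<inter> ?R \<noteq> {}"
    then obtain q where q: "q \<in> Pw X w" "q \<in> ?R" by blast
    then obtain p b where "q = p @ [b]" "word_occ w (w @ p @ [b]) \<noteq> {0}" using ret_char by blast
    then show False using q(1) by (simp add: Pw_def)
  qed
  have finR: "finite ?R" using finite_imageI[OF finSg, of ?f] img by (metis finite_Un)
  have finP': "finite (Pw X w - {[]})" using F by simp
  have "card ?Sg = card (?f ` ?Sg)" using card_image[OF inj] by simp
  also have "\<dots> = card (Pw X w - {[]}) + card ?R" unfolding img by (rule card_Un_disjoint[OF finP' finR disj])
  finally have c1: "card ?Sg = card (Pw X w - {[]}) + card ?R" .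
  have "[] \<in> Pw X w" using Pw_Nil[OF w] .
  then have c2: "card (Pw X w - {[]}) + 1 = card (Pw X w)" using F
    by (metis card_Suc_Diff1 Suc_eq_plus1)
  have c3: "card ?Sg = (\<Sum>p\<in>Pw X w. card (right_ext X (w @ p)))"
    by (simp add: card_SigmaI F fin_right)
  have "int (card ?R) + int (card (Pw X w)) = int (\<Sum>p\<in>Pw X w. card (right_ext X (w @ p))) + 1"
    using c1 c2 c3 by linarith
  then have "int (card ?R) = (\<Sum>p\<in>Pw X w. int (card (right_ext X (w @ p)))) - int (card (Pw X w)) + 1"
    by (simp add: of_nat_sum)
  also have "\<dots> = 1 + (\<Sum>p\<in>Pw X w. rho X (w @ p))"
    by (simp add: rho_def sum_subtractf)
  finally show ?thesis using finR by simp
qed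

end



context SS
begin

lemma sm_nonneg: "0 \<le> sm"
  by (rule sum_nonneg) (auto simp: lang_n_def intro: rho_nonneg)

lemma UR_of_fin:
  assumes irr: "irreducible_shift X" and w: "w \<in> lang X" and F: "finite (Pw X w)"
  shows "\<exists>K. \<forall>u\<in>lang X. K \<le> length u \<longrightarrow> word_occ w u \<noteq> {}"
proof -
  define K where "K = length w + (\<Sum>p\<in>Pw X w. length p) + 1"
  show ?thesis
  proof (intro exI[of _ K] ballI impI)
  fix u assume u: "u \<in> lang X" and Ku: "K \<le> length u"
  show "word_occ w u \<noteq> {}"
  proof
    assume none: "word_occ w u = {}"
    from irr w u obtain z where z: "w @ z @ u \<in> lang X" unfolding irreducible_shift_def by blast
    have "word_occ w (w @ z @ u) \<noteq> {}" using word_occ_zero[of w "z @ u"] by auto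
    from cover[OF z this] obtain x p where xp: "w @ z @ u = x @ w @ p" "p \<in> Pw X w" by blast
    from xp(1) have "(w @ z) @ u = x @ (w @ p)" by simp
    then obtain us where us: "(w @ z = x @ us \<and> us @ u = w @ p) \<or> ((w @ z) @ us = x \<and> u = us @ (w @ p))"
      unfolding append_eq_append_conv2 by blast
    then show False
    proof
      assume H: "w @ z = x @ us \<and> us @ u = w @ p"
      then have "length (us @ u) = length (w @ p)" by simp
      then have "length u \<le> length (w @ p)" by simp
      moreover have "length p \<le> (\<Sum>p\<in>Pw X w. length p)" using member_le_sum[OF xp(2) _ F, of length] by simp
      ultimately show False using Ku unfolding K_def by simp
    next
      assume H: "(w @ z) @ us = x \<and> u = us @ (w @ p)"
      then have "length us \<in> word_occ w u" using word_occ_mid[of us w p] by simp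
      then show False using none by simp
    qed
  qed
  qed
qed

lemma fin_of_UR:
  assumes UR: "\<forall>u\<in>lang X. K \<le> length u \<longrightarrow> word_occ w u \<noteq> {}"
  shows "finite (Pw X w)"
proof (rule finite_subset[OF _ finite_lists_length_le[OF finA, of K]])
  show "Pw X w \<subseteq> {xs. set xs \<subseteq> A \<and> length xs \<le> K}"
  proof
    fix p assume p: "p \<in> Pw X w"
    have "length p \<le> K"
    proof (rule ccontr)
      assume "\<not> length p \<le> K"
      then obtain c p' where cp: "p = c # p'" and lp: "K \<le> length p'" by (cases p) auto
      have "(w @ [c]) @ p' \<in> lang X" using Pw_L[OF p] cp by simp
      then have "p' \<in> lang X" by (rule lang_suffix)
      then have "word_occ w p' \<noteq> {}" using UR lp by blast
      then obtain j where "j \<in> word_occ w p'" by blast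
      then have "length (w @ [c]) + j \<in> word_occ w ((w @ [c]) @ p')" by (rule word_occ_left)
      then have "length w + 1 + j \<in> word_occ w (w @ p)" using cp by simp
      then show False using p unfolding Pw_def by simp
    qed
    then show "p \<in> {xs. set xs \<subseteq> A \<and> length xs \<le> K}" using Pw_set[OF p] by simp
  qed
qed

lemma finite_Pw_long:
  assumes irr: "irreducible_shift X" and w: "w \<in> lang X" and mw: "m \<le> length w"
  shows "finite (Pw X w)"
proof (rule ccontr)
  assume inf: "infinite (Pw X w)"
  define B where "B = {p \<in> Pw X w. 0 < rho X (w @ p)}"
  have finB: "finite B"
  proof (rule ccontr)
    assume "infinite B"
    then obtain F where F: "F \<subseteq> B" "finite F" "card F = nat sm + 1"
      using infinite_arbitrarily_large by blast
    have "int (card F) = (\<Sum>p\<in>F. (1::int))" by simp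
    also have "\<dots> \<le> (\<Sum>p\<in>F. rho X (w @ p))"
      by (rule sum_mono) (use F(1) in \<open>auto simp: B_def\<close>)
    also have "\<dots> \<le> sm" using sum_le[OF w mw F(2)] F(1) unfolding B_def by blast
    finally show False using F(3) sm_nonneg by simp
  qed
  define D where "D = Suc (\<Sum>p\<in>B. length p)"
  have rho0: "card (right_ext X (w @ p)) = 1" if p: "p \<in> Pw X w" and Dp: "D \<le> length p" for p
  proof -
    have "p \<notin> B"
    proof
      assume "p \<in> B"
      then have "length p \<le> (\<Sum>p\<in>B. length p)" using member_le_sum[OF _ _ finB, of p length] by simp
      then show False using Dp unfolding D_def by simp
    qed
    then have "rho X (w @ p) \<le> 0" using p unfolding B_def by simp
    moreover have "0 \<le> rho X (w @ p)" using rho_nonneg Pw_L[OF p] by blast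
    ultimately show ?thesis unfolding rho_def by simp
  qed
  define Q where "Q = {p \<in> Pw X w. D \<le> length p}"
  have "Pw X w \<subseteq> Q \<union> {xs. set xs \<subseteq> A \<and> length xs \<le> D}"
    unfolding Q_def using Pw_set by fastforce
  then have infQ: "infinite Q" using inf finite_lists_length_le[OF finA, of D]
    by (meson finite_UnI finite_subset)
  have "take D ` Q \<subseteq> {xs. set xs \<subseteq> A \<and> length xs = D}"
  proof
    fix t assume "t \<in> take D ` Q"
    then obtain q where q: "q \<in> Q" "t = take D q" by blast
    then have "set q \<subseteq> A" "D \<le> length q" unfolding Q_def using Pw_set by auto
    then show "t \<in> {xs. set xs \<subseteq> A \<and> length xs = D}" using q(2) set_take_subset[of D q] by auto
  qed
  then have "finite (take D ` Q)" using fin_lists finite_subset by blast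
  from pigeonhole_infinite[OF infQ this] obtain p1 where p1: "p1 \<in> Q"
    and infI: "infinite {a \<in> Q. take D a = take D p1}" by blast
  define p0 where "p0 = take D p1"
  have p0P: "p0 \<in> Pw X w" using p1 Pw_take unfolding p0_def Q_def by blast
  have lp0: "length p0 = D" using p1 unfolding p0_def Q_def by simp
  have ext: "\<exists>z. length z = n \<and> p0 @ z \<in> Pw X w" for n
  proof -
    have "\<exists>q\<in>{a \<in> Q. take D a = take D p1}. D + n \<le> length q"
    proof (rule ccontr)
      assume "\<not> ?thesis"
      then have "{a \<in> Q. take D a = take D p1} \<subseteq> {xs. set xs \<subseteq> A \<and> length xs \<le> D + n}"
        unfolding Q_def using Pw_set by fastforce
      then show False using infI finite_lists_length_le[OF finA, of "D + n"] finite_subset by blast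
    qed
    then obtain q where q: "q \<in> Q" "take D q = p0" "D + n \<le> length q" unfolding p0_def by blast
    have "take (D + n) q = take D q @ take n (drop D q)" by (rule take_add)
    then have "p0 @ take n (drop D q) = take (D + n) q" using q(2) by simp
    moreover have "take (D + n) q \<in> Pw X w" using q(1) Pw_take unfolding Q_def by blast
    moreover have "length (take n (drop D q)) = n" using q(3) by simp
    ultimately show ?thesis by metis
  qed
  have main: "(\<forall>x y. length x = n \<longrightarrow> length y = n \<longrightarrow> w @ p0 @ x \<in> lang X \<longrightarrow> w @ p0 @ y \<in> lang X \<longrightarrow> x = y)
      \<and> (\<forall>x. length x = n \<longrightarrow> w @ p0 @ x \<in> lang X \<longrightarrow> p0 @ x \<in> Pw X w)" for n
  proof (induction n)
    case 0 then show ?case using p0P by simp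
  next
    case (Suc n)
    have U: "\<forall>x y. length x = Suc n \<longrightarrow> length y = Suc n \<longrightarrow> w @ p0 @ x \<in> lang X \<longrightarrow> w @ p0 @ y \<in> lang X \<longrightarrow> x = y"
    proof (intro allI impI)
      fix x y assume lx: "length x = Suc n" and ly: "length y = Suc n"
        and xL: "w @ p0 @ x \<in> lang X" and yL: "w @ p0 @ y \<in> lang X"
      from lx obtain x' b where x: "x = x' @ [b]" "length x' = n" by (metis length_Suc_conv_rev)
      from ly obtain y' c where y: "y = y' @ [c]" "length y' = n" by (metis length_Suc_conv_rev)
      have x'L: "w @ p0 @ x' \<in> lang X" using xL x lang_prefix[of "w @ p0 @ x'" "[b]"] by simp
      have y'L: "w @ p0 @ y' \<in> lang X" using yL y lang_prefix[of "w @ p0 @ y'" "[c]"] by simp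
      have xy: "x' = y'" using Suc.IH x(2) y(2) x'L y'L by blast
      have P: "p0 @ x' \<in> Pw X w" using Suc.IH x(2) x'L by blast
      have "D \<le> length (p0 @ x')" using lp0 by simp
      then have c1: "card (right_ext X (w @ p0 @ x')) = 1" using rho0[OF P] by simp
      have "b \<in> right_ext X (w @ p0 @ x')" using xL x by (simp add: right_ext_def)
      moreover have "c \<in> right_ext X (w @ p0 @ x')" using yL y xy by (simp add: right_ext_def)
      ultimately have "b = c" using c1 by (metis card_1_singletonE singletonD)
      then show "x = y" using x y xy by simp
    qed
    moreover have "\<forall>x. length x = Suc n \<longrightarrow> w @ p0 @ x \<in> lang X \<longrightarrow> p0 @ x \<in> Pw X w"
    proof (intro allI impI)
      fix x assume lx: "length x = Suc n" and xL: "w @ p0 @ x \<in> lang X"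
      obtain z where z: "length z = Suc n" "p0 @ z \<in> Pw X w" using ext by blast
      have "w @ p0 @ z \<in> lang X" using Pw_L[OF z(2)] by simp
      then have "x = z" using U lx z(1) xL by blast
      then show "p0 @ x \<in> Pw X w" using z by simp
    qed
    ultimately show ?case by blast
  qed
  from irr have "\<exists>z. (w @ p0) @ z @ w \<in> lang X"
    using Pw_L[OF p0P] w unfolding irreducible_shift_def by blast
  then obtain z where zL: "w @ p0 @ (z @ w) \<in> lang X" by auto
  then have "p0 @ z @ w \<in> Pw X w" using main[of "length (z @ w)"] by blast
  then have O: "word_occ w (w @ p0 @ z @ w) = {0}" by (simp add: Pw_def)
  have "length (w @ p0 @ z) \<in> word_occ w ((w @ p0 @ z) @ w @ [])" by (rule word_occ_mid)
  then have "length (w @ p0 @ z) \<in> word_occ w (w @ p0 @ z @ w)" by simp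
  moreover have "length (w @ p0 @ z) \<noteq> 0" using lp0 unfolding D_def by simp
  ultimately show False using O by simp
qed

lemma finite_Pw_all:
  assumes irr: "irreducible_shift X" and w: "w \<in> lang X"
  shows "finite (Pw X w)"
proof (cases "m \<le> length w")
  case True then show ?thesis using finite_Pw_long[OF irr w] by simp
next
  case False
  obtain t where t: "length t = m - length w" "w @ t \<in> lang X" using lang_extend[OF w] by blast
  have "m \<le> length (w @ t)" using t False by simp
  then have "finite (Pw X (w @ t))" using finite_Pw_long[OF irr t(2)] by simp
  from UR_of_fin[OF irr t(2) this] obtain K where
    K: "\<forall>u\<in>lang X. K \<le> length u \<longrightarrow> word_occ (w @ t) u \<noteq> {}" by blast
  have "\<forall>u\<in>lang X. K \<le> length u \<longrightarrow> word_occ w u \<noteq> {}"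
    using K word_occ_mono_word by blast
  then show ?thesis by (rule fin_of_UR)
qed

end

theorem mainTheorem12:
  fixes A :: "'a set" and X :: "(int \<Rightarrow> 'a) set" and m :: nat
  assumes "shift_space A X"
    and "irreducible_shift X"
    and "eventually_dendric X m"
  shows "(\<forall>w\<in>lang X. finite (return_words X w))
    \<and> (\<forall>w\<in>lang_ge X m. int (card (return_words X w)) = 1 + rho_set X (lang_n X m))"
proof -
  interpret SS A X m using assms(1,3) by unfold_locales
  have P1: "\<forall>w\<in>lang X. finite (return_words X w)"
    using ret_count finite_Pw_all[OF assms(2)] by blast
  have P2: "int (card (return_words X w)) = 1 + rho_set X (lang_n X m)" if w: "w \<in> lang_ge X m" for w
  proof -
    have wL: "w \<in> lang X" and mw: "m \<le> length w" using w by (auto simp: lang_ge_def)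
    have F: "finite (Pw X w)" using finite_Pw_all[OF assms(2) wL] .
    from UR_of_fin[OF assms(2) wL F] obtain K where
      K: "\<forall>u\<in>lang X. K \<le> length u \<longrightarrow> word_occ w u \<noteq> {}" by blast
    have "int (card (return_words X w)) = 1 + (\<Sum>p\<in>Pw X w. rho X (w @ p))"
      using ret_count[OF wL F] by simp
    also have "\<dots> = 1 + sm" using sum_eq[OF wL mw F K] by simp
    finally show ?thesis by (simp add: rho_set_def)
  qed
  show ?thesis using P1 P2 by blast
qed



end
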